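(* Let $C\subseteq\mathbb{S}$ be an s-convex set. Then: (i) there is $u_0\in\mathbb{R}^n$ with $\|u_0\|=1$ such that $C\subseteq\{x\in\mathbb{R}^n\mid\langle x,u_0\rangle\ge0\}\cap\mathbb{S}$; (ii) if moreover $C$ is closed, there are $u_0\in\mathbb{R}^n$ with $\|u_0\|=1$ and $\alpha>0$ such that $C\subseteq\{x\in\mathbb{R}^n\mid\langle x,u_0\rangle\ge\alpha\}\cap\mathbb{S}$; in particular $C\subseteq\{x\in\mathbb{S}\mid \langle x,u_0\rangle>0\}$.
   Context: Standing setting: $n\ge 2$; $\mathbb{R}^n$ carries the usual inner product $\langle\cdot,\cdot\rangle$ and Euclidean norm $\|\cdot\|$; $o$ denotes the zero vector. $\Phi:\mathbb{R}^n\to\mathbb{R}_+:=[0,\infty)$ is a continuous function with $\Phi(tx)=t\Phi(x)$ for all $x\in\mathbb{R}^n$, $t\ge 0$, and $\Phi(x)=0$ iff $x=o$. Set $\mathbb{S}:=\{x\in\mathbb{R}^n\mid \Phi(x)=1\}$ (with the topology induced from $\mathbb{R}^n$), and $\rho:\mathbb{R}^n\to\{o\}\cup\mathbb{S}$, $\rho(x):=x/\Phi(x)$ for $x\neq o$, $\rho(o):=o$. For $x,y\in\mathbb{S}$, $\lambda\in[0,1]$, $\lambda x+_s(1-\lambda)y:=\rho(\lambda x+(1-\lambda)y)$. A nonempty set $S\subseteq\mathbb{S}$ is called s-convex if $\lambda x+_s(1-\lambda)y\in S$ for all $x,y\in S$ and $\lambda\in[0,1]$. *)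

theory Defs
  imports "HOL-Analysis.Analysis"
begin

definition gauge_fun :: "(real^'n \<Rightarrow> real) \<Rightarrow> bool" where
  "gauge_fun Phi \<longleftrightarrow> continuous_on UNIV Phi \<and> (\<forall>x. Phi x \<ge> 0) \<and>
     (\<forall>x t. t \<ge> 0 \<longrightarrow> Phi (t *\<^sub>R x) = t * Phi x) \<and> (\<forall>x. Phi x = 0 \<longleftrightarrow> x = 0)"

definition Ssph :: "(real^'n \<Rightarrow> real) \<Rightarrow> (real^'n) set" where
  "Ssph Phi = {x. Phi x = 1}"

definition rho :: "(real^'n \<Rightarrow> real) \<Rightarrow> real^'n \<Rightarrow> real^'n" where
  "rho Phi x = (if x = 0 then 0 else (1 / Phi x) *\<^sub>R x)"

definition scomb :: "(real^'n \<Rightarrow> real) \<Rightarrow> real \<Rightarrow> real^'n \<Rightarrow> real^'n \<Rightarrow> real^'n" where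
  "scomb Phi l x y = rho Phi (l *\<^sub>R x + (1 - l) *\<^sub>R y)"

definition s_convex :: "(real^'n \<Rightarrow> real) \<Rightarrow> (real^'n) set \<Rightarrow> bool" where
  "s_convex Phi S \<longleftrightarrow> S \<noteq> {} \<and> S \<subseteq> Ssph Phi \<and>
     (\<forall>x\<in>S. \<forall>y\<in>S. \<forall>l\<in>{0..1}. scomb Phi l x y \<in> S)"

end

theory Submission
  imports Defs
begin

lemma cone_convex:
  fixes Phi :: "real^'n \<Rightarrow> real" and C :: "(real^'n) set"
  assumes g: "gauge_fun Phi" and s: "s_convex Phi C"
  defines "K \<equiv> {t *\<^sub>R c | t c. t > 0 \<and> c \<in> C}"
  shows "convex K" "0 \<notin> K" "C \<subseteq> K"
proof -
  have P0: "Phi 0 = 0" using g unfolding gauge_fun_def by blast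
  have Pnn: "\<And>x. Phi x \<ge> 0" using g unfolding gauge_fun_def by blast
  have Pz: "\<And>x. Phi x = 0 \<longleftrightarrow> x = 0" using g unfolding gauge_fun_def by blast
  have CS: "\<And>c. c \<in> C \<Longrightarrow> Phi c = 1" using s unfolding s_convex_def Ssph_def by blast
  have cl: "\<And>x y l. x \<in> C \<Longrightarrow> y \<in> C \<Longrightarrow> 0 \<le> l \<Longrightarrow> l \<le> 1 \<Longrightarrow> scomb Phi l x y \<in> C"
    using s unfolding s_convex_def by auto
  show "C \<subseteq> K" unfolding K_def
  proof
    fix c assume "c \<in> C" then show "c \<in> {t *\<^sub>R c | t c. t > 0 \<and> c \<in> C}"
      by (intro CollectI exI[of _ 1] exI[of _ c]) auto
  qed
  show "0 \<notin> K" unfolding K_def using CS P0 by auto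
  show "convex K" unfolding convex_def
  proof (intro allI impI ballI)
    fix p q :: "real^'n" and u v :: real
    assume p: "p \<in> K" and q: "q \<in> K" and uv: "0 \<le> u" "0 \<le> v" "u + v = 1"
    obtain t x where tx: "p = t *\<^sub>R x" "t > 0" "x \<in> C" using p unfolding K_def by blast
    obtain r y where ry: "q = r *\<^sub>R y" "r > 0" "y \<in> C" using q unfolding K_def by blast
    define a where "a = u * t"
    define b where "b = v * r"
    have a0: "a \<ge> 0" "b \<ge> 0" using uv tx ry by (auto simp: a_def b_def)
    have ab: "a + b > 0"
    proof (cases "u = 0")
      case True then have "v = 1" using uv by simp
      then show ?thesis using ry a0 by (simp add: b_def)
    next
      case False then have "u > 0" using uv by simp
      then show ?thesis using tx a0 by (simp add: a_def add_pos_nonneg)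
    qed
    define l where "l = a / (a + b)"
    have l01: "0 \<le> l" "l \<le> 1" using a0 ab by (auto simp: l_def)
    have oml: "1 - l = b / (a + b)" using ab by (simp add: l_def field_simps)
    define z where "z = l *\<^sub>R x + (1 - l) *\<^sub>R y"
    have zC: "rho Phi z \<in> C" using cl[OF tx(3) ry(3) l01] by (simp add: scomb_def z_def)
    have zne: "z \<noteq> 0"
    proof
      assume "z = 0" then have "rho Phi z = 0" by (simp add: rho_def)
      then show False using zC CS P0 by fastforce
    qed
    have Pzp: "Phi z > 0" using Pnn Pz zne by (metis less_eq_real_def)
    have eq: "u *\<^sub>R p + v *\<^sub>R q = ((a + b) * Phi z) *\<^sub>R rho Phi z"
    proof -
      have "((a + b) * Phi z) *\<^sub>R rho Phi z = (a + b) *\<^sub>R z"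
        using zne Pzp by (simp add: rho_def)
      also have "\<dots> = a *\<^sub>R x + b *\<^sub>R y"
      proof -
        have e1: "(a + b) * l = a" using ab by (simp add: l_def)
        have e2: "(a + b) * (1 - l) = b" using ab by (simp add: oml)
        show ?thesis by (simp add: z_def scaleR_add_right e1 e2)
      qed
      also have "\<dots> = u *\<^sub>R p + v *\<^sub>R q" by (simp add: tx ry a_def b_def)
      finally show ?thesis by simp
    qed
    show "u *\<^sub>R p + v *\<^sub>R q \<in> K" unfolding K_def eq
      apply (rule CollectI, rule exI[of _ "(a+b) * Phi z"], rule exI[of _ "rho Phi z"])
      using ab Pzp zC by simp
  qed
qed

lemma zero_not_hull:
  fixes Phi :: "real^'n \<Rightarrow> real" and C :: "(real^'n) set"
  assumes g: "gauge_fun Phi" and s: "s_convex Phi C"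
  shows "0 \<notin> convex hull C"
proof -
  define K where "K = {t *\<^sub>R c | t c. t > 0 \<and> c \<in> C}"
  have "convex K" "0 \<notin> K" "C \<subseteq> K" using cone_convex[OF g s] unfolding K_def by auto
  then have "convex hull C \<subseteq> K" by (simp add: hull_minimal)
  then show ?thesis using \<open>0 \<notin> K\<close> by blast
qed

lemma sph_compact:
  fixes Phi :: "real^'n \<Rightarrow> real"
  assumes g: "gauge_fun Phi"
  shows "compact (Ssph Phi)"
proof -
  have cont: "continuous_on UNIV Phi" and hom: "\<And>x t. t \<ge> 0 \<Longrightarrow> Phi (t *\<^sub>R x) = t * Phi x"
    and Pnn: "\<And>x. Phi x \<ge> 0" and Pz: "\<And>x. Phi x = 0 \<longleftrightarrow> x = 0"
    using g unfolding gauge_fun_def by blast+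
  have cl: "closed (Ssph Phi)" unfolding Ssph_def
    by (rule closed_Collect_eq[OF cont continuous_on_const])
  obtain w where w: "w \<in> sphere (0::real^'n) 1" "\<And>y. y \<in> sphere 0 1 \<Longrightarrow> Phi w \<le> Phi y"
  proof -
    have ne: "sphere (0::real^'n) 1 \<noteq> {}" by simp
    show ?thesis using continuous_attains_inf[OF compact_sphere ne continuous_on_subset[OF cont subset_UNIV]]
      that by blast
  qed
  have "w \<noteq> 0" using w(1) by auto
  then have "Phi w \<noteq> 0" using Pz by simp
  then have m: "Phi w > 0" using Pnn[of w] by linarith
  have bd: "\<And>x. x \<in> Ssph Phi \<Longrightarrow> norm x \<le> 1 / Phi w"
  proof -
    fix x assume "x \<in> Ssph Phi"
    then have x1: "Phi x = 1" by (simp add: Ssph_def)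
    then have xn: "x \<noteq> 0" using Pz[of x] by linarith
    have "Phi x = Phi (norm x *\<^sub>R ((1 / norm x) *\<^sub>R x))" using xn by simp
    also have "\<dots> = norm x * Phi ((1 / norm x) *\<^sub>R x)" by (rule hom) simp
    finally have "Phi x = norm x * Phi ((1 / norm x) *\<^sub>R x)" .
    moreover have "(1 / norm x) *\<^sub>R x \<in> sphere 0 1" using xn by simp
    then have "Phi w \<le> Phi ((1 / norm x) *\<^sub>R x)" by (rule w(2))
    then have "norm x * Phi w \<le> norm x * Phi ((1 / norm x) *\<^sub>R x)"
      by (rule mult_left_mono) simp
    ultimately have "norm x * Phi w \<le> 1" using x1 by linarith
    then show "norm x \<le> 1 / Phi w" using m by (simp add: field_simps)
  qed
  have "bounded (Ssph Phi)" unfolding bounded_iff using bd by blast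
  then show ?thesis using cl by (simp add: compact_eq_bounded_closed)
qed

theorem mainTheorem4:
  fixes Phi :: "real^'n \<Rightarrow> real" and C :: "(real^'n) set"
  assumes "CARD('n) \<ge> 2"
    and "gauge_fun Phi"
    and "s_convex Phi C"
  shows "(\<exists>u0. norm u0 = 1 \<and> C \<subseteq> {x. x \<bullet> u0 \<ge> 0} \<inter> Ssph Phi)
       \<and> (closedin (top_of_set (Ssph Phi)) C \<longrightarrow>
           (\<exists>u0 \<alpha>. norm u0 = 1 \<and> \<alpha> > 0 \<and> C \<subseteq> {x. x \<bullet> u0 \<ge> \<alpha>} \<inter> Ssph Phi
                  \<and> C \<subseteq> {x \<in> Ssph Phi. x \<bullet> u0 > 0}))"
proof
  have CS: "C \<subseteq> Ssph Phi" using assms(3) unfolding s_convex_def by blast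
  have h0: "0 \<notin> convex hull C" by (rule zero_not_hull[OF assms(2,3)])
  obtain a where a: "a \<noteq> 0" "\<forall>x\<in>convex hull C. 0 \<le> inner a x"
    using separating_hyperplane_set_0[OF convex_convex_hull h0] by blast
  show "\<exists>u0. norm u0 = 1 \<and> C \<subseteq> {x. x \<bullet> u0 \<ge> 0} \<inter> Ssph Phi"
  proof (intro exI conjI)
    show "norm ((1 / norm a) *\<^sub>R a) = 1" using a by simp
    show "C \<subseteq> {x. x \<bullet> ((1 / norm a) *\<^sub>R a) \<ge> 0} \<inter> Ssph Phi"
      using a(2) hull_subset[of C convex] CS by (auto simp: inner_commute)
  qed
  show "closedin (top_of_set (Ssph Phi)) C \<longrightarrow>
           (\<exists>u0 \<alpha>. norm u0 = 1 \<and> \<alpha> > 0 \<and> C \<subseteq> {x. x \<bullet> u0 \<ge> \<alpha>} \<inter> Ssph Phi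
                  \<and> C \<subseteq> {x \<in> Ssph Phi. x \<bullet> u0 > 0})"
  proof
    assume "closedin (top_of_set (Ssph Phi)) C"
    then have "closed C" using closedin_closed_trans compact_imp_closed sph_compact[OF assms(2)] by blast
    moreover have "bounded C" using CS sph_compact[OF assms(2)] bounded_subset compact_imp_bounded by blast
    ultimately have "compact C" by (simp add: compact_eq_bounded_closed)
    then have "closed (convex hull C)" by (simp add: compact_convex_hull compact_imp_closed)
    then obtain b \<beta> where b: "b \<noteq> 0" "0 < \<beta>" "\<forall>x\<in>convex hull C. inner b x > \<beta>"
      using separating_hyperplane_closed_0[OF convex_convex_hull _ h0] by blast
    have nb: "norm b > 0" using b by simp
    show "\<exists>u0 \<alpha>. norm u0 = 1 \<and> \<alpha> > 0 \<and> C \<subseteq> {x. x \<bullet> u0 \<ge> \<alpha>} \<inter> Ssph Phi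
                  \<and> C \<subseteq> {x \<in> Ssph Phi. x \<bullet> u0 > 0}"
    proof (intro exI conjI)
      show "norm ((1 / norm b) *\<^sub>R b) = 1" using b by simp
      show "\<beta> / norm b > 0" using b nb by simp
      have key: "\<And>x. x \<in> C \<Longrightarrow> x \<bullet> ((1 / norm b) *\<^sub>R b) > \<beta> / norm b"
      proof -
        fix x assume "x \<in> C"
        then have "inner b x > \<beta>" using b(3) hull_subset[of C convex] by blast
        then show "x \<bullet> ((1 / norm b) *\<^sub>R b) > \<beta> / norm b"
          using nb by (simp add: inner_commute divide_strict_right_mono)
      qed
      show "C \<subseteq> {x. x \<bullet> ((1 / norm b) *\<^sub>R b) \<ge> \<beta> / norm b} \<inter> Ssph Phi"
        using key CS by (auto intro: less_imp_le)
      show "C \<subseteq> {x \<in> Ssph Phi. x \<bullet> ((1 / norm b) *\<^sub>R b) > 0}"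
        using key CS b nb by (smt (verit) divide_pos_pos subset_iff mem_Collect_eq)
    qed
  qed
qed

end
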